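(* Let $\kappa\in\mathbb K$, let $(B_n)_{n\ge1}$ be Hochschild 1-cocycles of $H_R$, and let $X(g)=\sum_{n\ge0}x_ng^n\in H_R[[g]]$ be the unique solution of the combinatorial Dyson–Schwinger equation $X(g)=\mathbb 1+\sum_{n\ge1}g^nB_n\big(X(g)^{1+n\kappa}\big)$. Let $\mathcal A$ be a commutative unital algebra, $\Psi\colon H_R\to\mathcal A$ a character, $\psi\colon H_R\to\mathcal A$ an infinitesimal character and $\lambda\colon H_R\to\mathcal A$ linear. Then in $\mathcal A[[g]]$: $$(\Psi\star\lambda)\circ X(g)=\big[\Psi\circ X(g)\big]\cdot\sum_{n\ge0}\lambda(x_n)\Big(g\,[\Psi\circ X(g)]^{\kappa}\Big)^n,$$ $$(\psi\star\lambda)\circ X(g)=\big[\psi\circ X(g)\big]\cdot(1+\kappa g\partial_g)\big[\lambda\circ X(g)\big].$$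
   Context: $\mathbb K$ is a field of characteristic zero; $H_R$ is the Connes–Kreimer Hopf algebra of rooted trees (free commutative algebra on rooted trees, basis rooted forests, unit $\mathbb 1$, grading by number of nodes, $B_+$ grafting onto a new root, coproduct with $\Delta\circ B_+=B_+\otimes\mathbb 1+(\mathrm{id}\otimes B_+)\circ\Delta$, counit $\varepsilon$). A 1-cocycle is a linear $B\colon H_R\to H_R$ with $\Delta\circ B=(\mathrm{id}\otimes B)\circ\Delta+B\otimes\mathbb 1$. For $p\in\mathbb K$ and $Y\in H_R[[g]]$ (or $\mathcal A[[g]]$) with constant term $\mathbb 1$, $Y^p:=\sum_{k\ge0}\binom pk(Y-\mathbb 1)^k$. For linear $\chi\colon H_R\to\mathcal A$, $\chi\circ X(g):=\sum_n\chi(x_n)g^n$. A character is a unital algebra morphism; an infinitesimal character is a linear $\psi$ with $\psi(ab)=\psi(a)\varepsilon(b)+\varepsilon(a)\psi(b)$. Convolution $\alpha\star\beta=m_{\mathcal A}\circ(\alpha\otimes\beta)\circ\Delta$. *)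

theory Defs
  imports "HOL-Library.Poly_Mapping" "HOL-Library.Multiset" "HOL-Library.Product_Plus"
          "HOL-Computational_Algebra.Formal_Power_Series"
begin

text \<open>Unordered (non-planar) rooted trees: a tree is a root with a multiset of subtrees.
  A rooted forest is a multiset of rooted trees.\<close>
datatype rtree = Node "rtree multiset"

type_synonym forest = "rtree multiset"

text \<open>H_R over the field 'k: finitely supported functions on forests (basis = forests).
  The product is the convolution w.r.t. multiset union, i.e. disjoint union of forests,
  so this is the free commutative algebra on rooted trees; the unit is the empty forest.\<close>
type_synonym 'k HR = "forest \<Rightarrow>\<^sub>0 'k"

text \<open>H_R tensor H_R, with basis pairs of forests and the tensor-product algebra structure.\<close>
type_synonym 'k HR2 = "(forest \<times> forest) \<Rightarrow>\<^sub>0 'k"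

definition forest_basis :: "forest \<Rightarrow> 'k::comm_ring_1 HR" where
  "forest_basis F = Poly_Mapping.single F 1"

definition pm_smult :: "'k::comm_ring_1 \<Rightarrow> ('a \<Rightarrow>\<^sub>0 'k) \<Rightarrow> ('a \<Rightarrow>\<^sub>0 'k)" where
  "pm_smult c x = Poly_Mapping.map ((*) c) x"

definition tensor :: "'k::comm_ring_1 HR \<Rightarrow> 'k HR \<Rightarrow> 'k HR2" where
  "tensor x y = (\<Sum>a\<in>Poly_Mapping.keys x. \<Sum>b\<in>Poly_Mapping.keys y.
       Poly_Mapping.single (a, b) (Poly_Mapping.lookup x a * Poly_Mapping.lookup y b))"

text \<open>The grafting operator B_+ on forests, and (id \<otimes> B_+) on basis elements of HR2.\<close>
definition id_tensor_Bplus :: "'k::comm_ring_1 HR2 \<Rightarrow> 'k HR2" where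
  "id_tensor_Bplus t = (\<Sum>ab\<in>Poly_Mapping.keys t.
       Poly_Mapping.single (fst ab, {# Node (snd ab) #}) (Poly_Mapping.lookup t ab))"

text \<open>Coproduct on trees, defined recursively by
  Delta(B_+(F)) = B_+(F) \<otimes> 1 + (id \<otimes> B_+)(Delta F), with Delta multiplicative on forests.\<close>
primrec delta_tree :: "rtree \<Rightarrow> 'k::comm_ring_1 HR2" where
  "delta_tree (Node F) =
     Poly_Mapping.single ({# Node F #}, {#}) 1
     + id_tensor_Bplus (prod_mset (image_mset delta_tree F))"

definition delta_forest :: "forest \<Rightarrow> 'k::comm_ring_1 HR2" where
  "delta_forest F = prod_mset (image_mset delta_tree F)"

definition Delta :: "'k::comm_ring_1 HR \<Rightarrow> 'k HR2" where
  "Delta x = (\<Sum>F\<in>Poly_Mapping.keys x. pm_smult (Poly_Mapping.lookup x F) (delta_forest F))"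

definition counit :: "'k::comm_ring_1 HR \<Rightarrow> 'k" where
  "counit x = Poly_Mapping.lookup x {#}"

definition id_tensor :: "('k::comm_ring_1 HR \<Rightarrow> 'k HR) \<Rightarrow> 'k HR2 \<Rightarrow> 'k HR2" where
  "id_tensor B t = (\<Sum>ab\<in>Poly_Mapping.keys t.
       pm_smult (Poly_Mapping.lookup t ab) (tensor (forest_basis (fst ab)) (B (forest_basis (snd ab)))))"

definition HR_linear :: "('k::comm_ring_1 HR \<Rightarrow> 'k HR) \<Rightarrow> bool" where
  "HR_linear B \<longleftrightarrow> (\<forall>x y. B (x + y) = B x + B y) \<and> (\<forall>c x. B (pm_smult c x) = pm_smult c (B x))"

definition one_cocycle :: "('k::comm_ring_1 HR \<Rightarrow> 'k HR) \<Rightarrow> bool" where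
  "one_cocycle B \<longleftrightarrow> HR_linear B \<and>
     (\<forall>x. Delta (B x) = id_tensor B (Delta x) + tensor (B x) 1)"

text \<open>A commutative unital K-algebra A is given as a commutative ring 'a together with a
  unital ring homomorphism iota : K \<rightarrow> A (the structure map).\<close>
definition alg_struct :: "('k::field \<Rightarrow> 'a::comm_ring_1) \<Rightarrow> bool" where
  "alg_struct iota \<longleftrightarrow> iota 1 = 1 \<and> (\<forall>a b. iota (a + b) = iota a + iota b)
     \<and> (\<forall>a b. iota (a * b) = iota a * iota b)"

definition lin_map :: "('k::comm_ring_1 \<Rightarrow> 'a::comm_ring_1) \<Rightarrow> ('k HR \<Rightarrow> 'a) \<Rightarrow> bool" where
  "lin_map iota \<chi> \<longleftrightarrow> (\<forall>x y. \<chi> (x + y) = \<chi> x + \<chi> y)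
     \<and> (\<forall>c x. \<chi> (pm_smult c x) = iota c * \<chi> x)"

definition character :: "('k::comm_ring_1 \<Rightarrow> 'a::comm_ring_1) \<Rightarrow> ('k HR \<Rightarrow> 'a) \<Rightarrow> bool" where
  "character iota \<chi> \<longleftrightarrow> lin_map iota \<chi> \<and> \<chi> 1 = 1 \<and> (\<forall>x y. \<chi> (x * y) = \<chi> x * \<chi> y)"

definition inf_character :: "('k::comm_ring_1 \<Rightarrow> 'a::comm_ring_1) \<Rightarrow> ('k HR \<Rightarrow> 'a) \<Rightarrow> bool" where
  "inf_character iota \<psi> \<longleftrightarrow> lin_map iota \<psi> \<and>
     (\<forall>x y. \<psi> (x * y) = \<psi> x * iota (counit y) + iota (counit x) * \<psi> y)"

text \<open>Convolution alpha \<star> beta = m_A \<circ> (alpha \<otimes> beta) \<circ> Delta.\<close>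
definition conv :: "('k::comm_ring_1 \<Rightarrow> 'a::comm_ring_1) \<Rightarrow> ('k HR \<Rightarrow> 'a) \<Rightarrow> ('k HR \<Rightarrow> 'a) \<Rightarrow> 'k HR \<Rightarrow> 'a" where
  "conv iota \<alpha> \<beta> x = (\<Sum>ab\<in>Poly_Mapping.keys (Delta x).
       iota (Poly_Mapping.lookup (Delta x) ab) * \<alpha> (forest_basis (fst ab)) * \<beta> (forest_basis (snd ab)))"

text \<open>Y^p := sum over k of (p choose k) (Y - 1)^k for Y with constant term 1, p in K; scalars act
  through the structure map iota. Since (Y-1)^k has order \<ge> k, the coefficient of g^n
  only involves k \<le> n.\<close>
definition fps_gpow :: "('k::field_char_0 \<Rightarrow> 'a::comm_ring_1) \<Rightarrow> 'k \<Rightarrow> 'a fps \<Rightarrow> 'a fps" where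
  "fps_gpow iota p Y = Abs_fps (\<lambda>n. \<Sum>k\<le>n. iota (p gchoose k) * fps_nth ((Y - 1) ^ k) n)"

definition fps_comp :: "('b \<Rightarrow> 'a::comm_ring_1) \<Rightarrow> 'b fps \<Rightarrow> 'a fps" where
  "fps_comp \<chi> X = Abs_fps (\<lambda>n. \<chi> (fps_nth X n))"

text \<open>\<Sum>_{n\<ge>0} c_n Z^n for Z of order \<ge> 1 (coefficient of g^m needs only n \<le> m).\<close>
definition fps_subst_sum :: "(nat \<Rightarrow> 'a::comm_ring_1) \<Rightarrow> 'a fps \<Rightarrow> 'a fps" where
  "fps_subst_sum c Z = Abs_fps (\<lambda>m. \<Sum>n\<le>m. c n * fps_nth (Z ^ n) m)"

definition HR_scalar :: "'k::comm_ring_1 \<Rightarrow> 'k HR" where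
  "HR_scalar c = Poly_Mapping.single {#} c"

end

theory Submission
  imports Defs
begin
unbundle fps_syntax



definition rhom :: "('a::comm_ring_1 \<Rightarrow> 'b::comm_ring_1) \<Rightarrow> bool" where
  "rhom f \<longleftrightarrow> (\<forall>x y. f (x + y) = f x + f y) \<and> (\<forall>x y. f (x * y) = f x * f y) \<and> f 1 = 1"

lemma rhom_add: "rhom f \<Longrightarrow> f (x + y) = f x + f y" by (simp add: rhom_def)
lemma rhom_mult: "rhom f \<Longrightarrow> f (x * y) = f x * f y" by (simp add: rhom_def)
lemma rhom_one: "rhom f \<Longrightarrow> f 1 = 1" by (simp add: rhom_def)
lemma rhom_zero: "rhom f \<Longrightarrow> f 0 = 0"
  using rhom_add[of f 0 0] by simp
lemma rhom_uminus: "rhom f \<Longrightarrow> f (- x) = - f x"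
  using rhom_add[of f x "-x"] rhom_zero[of f] by (simp add: eq_neg_iff_add_eq_0 add.commute)
lemma rhom_diff: "rhom f \<Longrightarrow> f (x - y) = f x - f y"
  using rhom_add[of f x "-y"] rhom_uminus[of f y] by simp
lemma rhom_sum: "rhom f \<Longrightarrow> f (sum g S) = sum (\<lambda>i. f (g i)) S"
  by (induction S rule: infinite_finite_induct) (auto simp: rhom_zero rhom_add)
lemma rhom_power: "rhom f \<Longrightarrow> f (x ^ n) = f x ^ n"
  by (induction n) (auto simp: rhom_one rhom_mult)
lemma rhom_of_nat: "rhom f \<Longrightarrow> f (of_nat n) = of_nat n"
  by (induction n) (auto simp: rhom_zero rhom_one rhom_add)
lemma rhom_comp: "rhom f \<Longrightarrow> rhom g \<Longrightarrow> rhom (g \<circ> f)"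
  by (simp add: rhom_def)

lemma fps_comp_nth[simp]: "fps_comp f A $ n = f (A $ n)"
  by (simp add: fps_comp_def)

lemma fps_comp_add: "rhom f \<Longrightarrow> fps_comp f (A + B) = fps_comp f A + fps_comp f B"
  by (simp add: fps_eq_iff rhom_add)
lemma fps_comp_mult: "rhom f \<Longrightarrow> fps_comp f (A * B) = fps_comp f A * fps_comp f B"
  by (simp add: fps_eq_iff fps_mult_nth rhom_sum rhom_mult)
lemma fps_comp_one: "rhom f \<Longrightarrow> fps_comp f 1 = 1"
  by (simp add: fps_eq_iff rhom_one rhom_zero)
lemma fps_comp_const: "rhom f \<Longrightarrow> fps_comp f (fps_const c) = fps_const (f c)"
  by (simp add: fps_eq_iff rhom_zero)
lemma fps_comp_fps_X: "rhom f \<Longrightarrow> fps_comp f fps_X = fps_X"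
  by (simp add: fps_eq_iff rhom_zero rhom_one fps_X_def)
lemma fps_comp_diff: "rhom f \<Longrightarrow> fps_comp f (A - B) = fps_comp f A - fps_comp f B"
  by (simp add: fps_eq_iff rhom_diff)
lemma fps_comp_power: "rhom f \<Longrightarrow> fps_comp f (A ^ n) = fps_comp f A ^ n"
  by (induction n) (auto simp: fps_comp_one fps_comp_mult)
lemma fps_comp_deriv: "rhom f \<Longrightarrow> fps_comp f (fps_deriv A) = fps_deriv (fps_comp f A)"
  by (simp add: fps_eq_iff rhom_mult rhom_add rhom_one rhom_of_nat)
lemma rhom_fps_comp: "rhom f \<Longrightarrow> rhom (fps_comp f)"
  by (simp add: rhom_def fps_comp_add fps_comp_mult fps_comp_one)

lemma trunc_mult:
  assumes "\<And>j. j \<le> n \<Longrightarrow> A $ j = A' $ j"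
  shows "(C * A) $ n = (C * A') $ n"
  using assms by (auto simp: fps_mult_nth intro!: sum.cong)

lemma trunc_power:
  assumes "\<And>j. j \<le> n \<Longrightarrow> A $ j = A' $ j"
  shows "j \<le> n \<Longrightarrow> (A ^ k) $ j = (A' ^ k) $ j"
proof (induction k arbitrary: j)
  case 0 then show ?case by simp
next
  case (Suc k)
  have "(A ^ Suc k) $ j = (\<Sum>i=0..j. A$i * (A^k)$(j-i))" by (simp add: fps_mult_nth)
  also have "\<dots> = (\<Sum>i=0..j. A'$i * (A'^k)$(j-i))"
    using Suc assms by (intro sum.cong) auto
  finally show ?case by (simp add: fps_mult_nth)
qed


section \<open>Generalized powers\<close>

lemma torsion_free:
  fixes s :: "'k::field_char_0 \<Rightarrow> 'r::comm_ring_1"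
  assumes s: "rhom s" and d: "of_nat (Suc n) * (d::'r) = 0"
  shows "d = 0"
proof -
  have "s (inverse (of_nat (Suc n))) * of_nat (Suc n) = 1"
    using rhom_mult[OF s, of "inverse (of_nat (Suc n))" "of_nat (Suc n)"] rhom_of_nat[OF s, of "Suc n"]
      rhom_one[OF s] by (simp del: of_nat_Suc)
  then have "d = s (inverse (of_nat (Suc n))) * (of_nat (Suc n) * d)"
    by (metis mult.assoc mult_1)
  with d show ?thesis by simp
qed

lemma gpow_nth: "fps_gpow s p Y $ n = (\<Sum>k\<le>n. s (p gchoose k) * ((Y - 1) ^ k) $ n)"
  by (simp add: fps_gpow_def)

definition Strunc :: "('k::field_char_0 \<Rightarrow> 'r::comm_ring_1) \<Rightarrow> 'k \<Rightarrow> 'r fps \<Rightarrow> nat \<Rightarrow> 'r fps" where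
  "Strunc s p Y M = (\<Sum>k\<le>M. fps_const (s (p gchoose k)) * (Y - 1) ^ k)"

lemma gpow_trunc:
  assumes Y0: "Y $ 0 = 1" and nM: "n \<le> M"
  shows "fps_gpow s p Y $ n = Strunc s p Y M $ n"
proof -
  have U0: "(Y - 1) $ 0 = 0" using Y0 by simp
  have "Strunc s p Y M $ n = (\<Sum>k\<le>M. s (p gchoose k) * ((Y - 1) ^ k) $ n)"
    by (simp add: Strunc_def fps_sum_nth)
  also have "\<dots> = (\<Sum>k\<le>n. s (p gchoose k) * ((Y - 1) ^ k) $ n)"
    using nM startsby_zero_power_prefix[OF U0]
    by (intro sum.mono_neutral_right) auto
  finally show ?thesis by (simp add: gpow_nth)
qed

lemma fps_const_s_mult: "rhom s \<Longrightarrow> fps_const (s (a * b)) = fps_const (s a) * fps_const (s b)"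
  by (simp add: rhom_mult fps_const_mult)
lemma fps_const_s_add: "rhom s \<Longrightarrow> fps_const (s (a + b)) = fps_const (s a) + fps_const (s b)"
  by (simp add: rhom_add fps_const_add)
lemma fps_const_s_diff: "rhom s \<Longrightarrow> fps_const (s (a - b)) = fps_const (s a) - fps_const (s b)"
  by (simp add: rhom_diff)
lemma fps_const_s_of_nat: "rhom s \<Longrightarrow> fps_const (s (of_nat n)) = of_nat n"
  by (simp add: rhom_of_nat fps_of_nat)

lemma trunc_ident:
  fixes s :: "'k::field_char_0 \<Rightarrow> 'r::comm_ring_1"
  assumes s: "rhom s"
  shows "Y * fps_deriv (Strunc s p Y M) - fps_const (s p) * fps_deriv Y * Strunc s p Y M
       = fps_const (s ((of_nat M - p) * (p gchoose M))) * fps_deriv Y * (Y - 1) ^ M"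
proof (induction M)
  case 0
  have "Strunc s p Y 0 = 1" by (simp add: Strunc_def rhom_one[OF s])
  then show ?case by (simp add: rhom_uminus[OF s]) (metis fps_const_neg minus_mult_left)
next
  case (Suc M)
  define U where "U = Y - 1"
  define a where "a = fps_const (s (p gchoose M))"
  define a' where "a' = fps_const (s (p gchoose Suc M))"
  define P where "P = fps_const (s p)"
  define S where "S = Strunc s p Y M"
  have Y: "Y = U + 1" by (simp add: U_def)
  have dY: "fps_deriv Y = fps_deriv U" by (simp add: U_def)
  have sc: "of_nat (Suc M) * (p gchoose Suc M) = (p - of_nat M) * (p gchoose M)"
    using gbinomial_absorption[of M p] gbinomial_absorb_comp[of p M] by simp
  have rel: "of_nat (Suc M) * a' = (P - of_nat M) * a"
  proof -
    have "fps_const (s (of_nat (Suc M) * (p gchoose Suc M))) = fps_const (s ((p - of_nat M) * (p gchoose M)))"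
      by (simp only: sc)
    then show ?thesis unfolding a_def a'_def P_def
      by (simp only: fps_const_s_mult[OF s] fps_const_s_diff[OF s] fps_const_s_of_nat[OF s])
  qed
  have cM: "fps_const (s ((of_nat M - p) * (p gchoose M))) = (of_nat M - P) * a"
    unfolding a_def P_def
    by (simp only: fps_const_s_mult[OF s] fps_const_s_diff[OF s] fps_const_s_of_nat[OF s])
  have cSM: "fps_const (s ((of_nat (Suc M) - p) * (p gchoose Suc M))) = (of_nat (Suc M) - P) * a'"
    unfolding a'_def P_def
    by (simp only: fps_const_s_mult[OF s] fps_const_s_diff[OF s] fps_const_s_of_nat[OF s])
  have SS: "Strunc s p Y (Suc M) = S + a' * U ^ Suc M"
    by (simp add: Strunc_def S_def a'_def U_def)
  have dSS: "fps_deriv (Strunc s p Y (Suc M)) = fps_deriv S + a' * (of_nat (Suc M) * fps_deriv U * U ^ M)"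
    unfolding SS by (simp add: fps_deriv_power' a'_def del: of_nat_Suc power_Suc)
  have IH: "Y * fps_deriv S - P * fps_deriv Y * S = (of_nat M - P) * a * fps_deriv U * U ^ M"
    using Suc.IH unfolding S_def P_def cM dY U_def .
  have "Y * fps_deriv (Strunc s p Y (Suc M)) - P * fps_deriv Y * Strunc s p Y (Suc M)
      = (Y * fps_deriv S - P * fps_deriv Y * S)
        + fps_deriv U * U ^ M * (of_nat (Suc M) * a' - (P - of_nat M) * a)
        + fps_deriv U * U ^ M * ((P - of_nat M) * a)
        + (of_nat (Suc M) - P) * a' * fps_deriv U * U ^ Suc M"
    unfolding dSS unfolding SS unfolding dY by (simp add: Y algebra_simps del: of_nat_Suc)
  also have "\<dots> = (of_nat (Suc M) - P) * a' * fps_deriv U * U ^ Suc M"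
    unfolding IH rel by (simp add: algebra_simps del: of_nat_Suc)
  finally show ?case unfolding P_def cSM dY U_def .
qed


lemma gpow_ode:
  fixes s :: "'k::field_char_0 \<Rightarrow> 'r::comm_ring_1"
  assumes s: "rhom s" and Y0: "Y $ 0 = 1"
  shows "Y * fps_deriv (fps_gpow s p Y) = fps_const (s p) * fps_deriv Y * fps_gpow s p Y"
proof (rule fps_ext)
  fix n
  define M where "M = Suc n"
  define S where "S = Strunc s p Y M"
  have a: "(Y * fps_deriv (fps_gpow s p Y)) $ n = (Y * fps_deriv S) $ n"
    by (rule trunc_mult) (simp add: gpow_trunc[OF Y0, where M="Suc n"] S_def M_def)
  have b: "(fps_const (s p) * fps_deriv Y * fps_gpow s p Y) $ n = (fps_const (s p) * fps_deriv Y * S) $ n"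
    by (rule trunc_mult) (simp add: gpow_trunc[OF Y0, where M="Suc n"] S_def M_def)
  have U0: "(Y - 1) $ 0 = 0" using Y0 by simp
  have c: "((fps_const (s ((of_nat M - p) * (p gchoose M))) * fps_deriv Y) * (Y - 1) ^ M) $ n = 0"
    unfolding fps_mult_nth using startsby_zero_power_prefix[OF U0, rule_format, of _ M]
    by (intro sum.neutral) (auto simp: M_def)
  have e: "Y * fps_deriv S - fps_const (s p) * fps_deriv Y * S
      = (fps_const (s ((of_nat M - p) * (p gchoose M))) * fps_deriv Y) * (Y - 1) ^ M"
    using trunc_ident[OF s, of Y p M] unfolding S_def by (simp only: mult.assoc)
  have "(Y * fps_deriv S - fps_const (s p) * fps_deriv Y * S) $ n = 0"
    using c by (simp only: e)
  then have "(Y * fps_deriv S) $ n - (fps_const (s p) * fps_deriv Y * S) $ n = 0"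
    by (simp only: fps_sub_nth)
  then show "(Y * fps_deriv (fps_gpow s p Y)) $ n = (fps_const (s p) * fps_deriv Y * fps_gpow s p Y) $ n"
    using a b by simp
qed

lemma ode_unique:
  fixes s :: "'k::field_char_0 \<Rightarrow> 'r::comm_ring_1" and Y Z W :: "'r fps"
  assumes s: "rhom s" and Y0: "Y $ 0 = 1"
    and Z: "Y * fps_deriv Z = c * fps_deriv Y * Z"
    and W: "Y * fps_deriv W = c * fps_deriv Y * W"
    and ZW0: "Z $ 0 = W $ 0"
  shows "Z = W"
proof -
  define D where "D = Z - W"
  have DE: "Y * fps_deriv D = c * fps_deriv Y * D"
    using Z W by (simp add: D_def algebra_simps)
  have "D $ n = 0" for n
  proof (induction n rule: less_induct)
    case (less n)
    show ?case
    proof (cases n)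
      case 0 then show ?thesis using ZW0 by (simp add: D_def)
    next
      case (Suc m)
      have r: "(c * fps_deriv Y * D) $ m = 0"
        unfolding fps_mult_nth using less Suc by (intro sum.neutral) auto
      have "(Y * fps_deriv D) $ m = (\<Sum>i=0..m. Y $ i * (of_nat (Suc (m - i)) * D $ Suc (m - i)))"
        by (simp add: fps_mult_nth del: of_nat_Suc)
      also have "\<dots> = (\<Sum>i\<in>{0}. Y $ i * (of_nat (Suc (m - i)) * D $ Suc (m - i)))"
        using less Suc by (intro sum.mono_neutral_right) auto
      also have "\<dots> = of_nat (Suc m) * D $ Suc m" using Y0 by simp
      finally have "of_nat (Suc m) * D $ Suc m = 0" using DE r by simp
      then show ?thesis using torsion_free[OF s] Suc by blast
    qed
  qed
  then show ?thesis by (simp add: D_def fps_eq_iff)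
qed

lemma gpow_0th: "rhom s \<Longrightarrow> fps_gpow s p Y $ 0 = 1"
  by (simp add: gpow_nth rhom_one)

lemma gpow_unique:
  fixes s :: "'k::field_char_0 \<Rightarrow> 'r::comm_ring_1" and Y Z :: "'r fps"
  assumes s: "rhom s" and Y0: "Y $ 0 = 1"
    and Z: "Y * fps_deriv Z = fps_const (s p) * fps_deriv Y * Z" and Z0: "Z $ 0 = 1"
  shows "Z = fps_gpow s p Y"
  by (rule ode_unique[OF s Y0 Z gpow_ode[OF s Y0]]) (simp add: Z0 gpow_0th[OF s])


lemma gpow_hom:
  fixes s1 :: "'k::field_char_0 \<Rightarrow> 'r::comm_ring_1" and s2 :: "'k \<Rightarrow> 'q::comm_ring_1"
    and f :: "'r \<Rightarrow> 'q"
  assumes s1: "rhom s1" and s2: "rhom s2" and f: "rhom f" and fs: "\<And>c. f (s1 c) = s2 c"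
    and Y0: "Y $ 0 = 1"
  shows "fps_comp f (fps_gpow s1 p Y) = fps_gpow s2 p (fps_comp f Y)"
proof (rule gpow_unique[OF s2])
  show "fps_comp f Y $ 0 = 1" using Y0 by (simp add: rhom_one[OF f])
  show "fps_comp f (fps_gpow s1 p Y) $ 0 = 1" by (simp add: gpow_0th[OF s1] rhom_one[OF f])
  have "fps_comp f (Y * fps_deriv (fps_gpow s1 p Y)) = fps_comp f (fps_const (s1 p) * fps_deriv Y * fps_gpow s1 p Y)"
    by (simp only: gpow_ode[OF s1 Y0])
  then show "fps_comp f Y * fps_deriv (fps_comp f (fps_gpow s1 p Y)) =
    fps_const (s2 p) * fps_deriv (fps_comp f Y) * fps_comp f (fps_gpow s1 p Y)"
    by (simp only: fps_comp_mult[OF f] fps_comp_deriv[OF f] fps_comp_const[OF f] fs)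
qed

lemma gpow_add:
  fixes s :: "'k::field_char_0 \<Rightarrow> 'r::comm_ring_1"
  assumes s: "rhom s" and Y0: "Y $ 0 = 1"
  shows "fps_gpow s p Y * fps_gpow s q Y = fps_gpow s (p + q) Y"
proof (rule gpow_unique[OF s Y0])
  show "(fps_gpow s p Y * fps_gpow s q Y) $ 0 = 1" by (simp add: gpow_0th[OF s])
  have p: "Y * fps_deriv (fps_gpow s p Y) = fps_const (s p) * fps_deriv Y * fps_gpow s p Y"
    and q: "Y * fps_deriv (fps_gpow s q Y) = fps_const (s q) * fps_deriv Y * fps_gpow s q Y"
    using gpow_ode[OF s Y0] by auto
  have "Y * fps_deriv (fps_gpow s p Y * fps_gpow s q Y)
     = fps_gpow s p Y * (Y * fps_deriv (fps_gpow s q Y)) + (Y * fps_deriv (fps_gpow s p Y)) * fps_gpow s q Y"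
    by (simp add: algebra_simps)
  also have "\<dots> = fps_const (s (p + q)) * fps_deriv Y * (fps_gpow s p Y * fps_gpow s q Y)"
    unfolding p q fps_const_s_add[OF s] by (simp add: algebra_simps del: fps_const_add)
  finally show "Y * fps_deriv (fps_gpow s p Y * fps_gpow s q Y) =
      fps_const (s (p + q)) * fps_deriv Y * (fps_gpow s p Y * fps_gpow s q Y)" .
qed

lemma gpow_one:
  fixes s :: "'k::field_char_0 \<Rightarrow> 'r::comm_ring_1"
  assumes s: "rhom s" and Y0: "Y $ 0 = 1"
  shows "fps_gpow s 1 Y = Y"
  by (rule gpow_unique[OF s Y0, symmetric]) (simp_all add: Y0 rhom_one[OF s] mult.commute)

lemma gpow_zero:
  fixes s :: "'k::field_char_0 \<Rightarrow> 'r::comm_ring_1"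
  assumes s: "rhom s" and Y0: "Y $ 0 = 1"
  shows "fps_gpow s 0 Y = 1"
  by (rule gpow_unique[OF s Y0, symmetric]) (simp_all add: rhom_zero[OF s])

lemma gpow_mult_base:
  fixes s :: "'k::field_char_0 \<Rightarrow> 'r::comm_ring_1"
  assumes s: "rhom s" and A0: "A $ 0 = 1" and B0: "B $ 0 = 1"
  shows "fps_gpow s p (A * B) = fps_gpow s p A * fps_gpow s p B"
proof (rule gpow_unique[OF s, symmetric])
  show "(A * B) $ 0 = 1" using A0 B0 by simp
  show "(fps_gpow s p A * fps_gpow s p B) $ 0 = 1" by (simp add: gpow_0th[OF s])
  have a: "A * fps_deriv (fps_gpow s p A) = fps_const (s p) * fps_deriv A * fps_gpow s p A"
    and b: "B * fps_deriv (fps_gpow s p B) = fps_const (s p) * fps_deriv B * fps_gpow s p B"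
    using gpow_ode[OF s A0] gpow_ode[OF s B0] by auto
  have "A * B * fps_deriv (fps_gpow s p A * fps_gpow s p B)
     = A * fps_gpow s p A * (B * fps_deriv (fps_gpow s p B)) + B * fps_gpow s p B * (A * fps_deriv (fps_gpow s p A))"
    by (simp add: algebra_simps)
  also have "\<dots> = fps_const (s p) * fps_deriv (A * B) * (fps_gpow s p A * fps_gpow s p B)"
    unfolding a b by (simp add: algebra_simps)
  finally show "A * B * fps_deriv (fps_gpow s p A * fps_gpow s p B) =
    fps_const (s p) * fps_deriv (A * B) * (fps_gpow s p A * fps_gpow s p B)" .
qed

lemma gpow_nat_mult:
  fixes s :: "'k::field_char_0 \<Rightarrow> 'r::comm_ring_1"
  assumes s: "rhom s" and Y0: "Y $ 0 = 1"
  shows "fps_gpow s (of_nat n * k) Y = fps_gpow s k Y ^ n"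
proof (induction n)
  case 0 then show ?case using gpow_zero[OF s Y0] by simp
next
  case (Suc n)
  have "fps_gpow s (of_nat (Suc n) * k) Y = fps_gpow s k Y * fps_gpow s (of_nat n * k) Y"
    using gpow_add[OF s Y0, of k "of_nat n * k"] by (simp add: algebra_simps)
  then show ?case using Suc by simp
qed

lemma gpow_local:
  assumes "\<And>j. j \<le> m \<Longrightarrow> A $ j = B $ j"
  shows "fps_gpow s p A $ m = fps_gpow s p B $ m"
proof -
  have "\<And>j. j \<le> m \<Longrightarrow> (A - 1) $ j = (B - 1) $ j" using assms by simp
  then have "\<And>k. ((A - 1) ^ k) $ m = ((B - 1) ^ k) $ m"
    using trunc_power by blast
  then show ?thesis by (simp add: gpow_nth)
qed

section \<open>Composition over commutative rings\<close>

lemma product_composition_lemma':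
  assumes c0: "c$0 = (0::'a::comm_ring_1)"
    and d0: "d$0 = 0"
  shows "((a oo c) * (b oo d))$n =
    sum (\<lambda>(k,m). a$k * b$m * (c^k * d^m) $ n) {(k,m). k + m \<le> n}"  (is "?l = ?r")
proof -
  have zc: "\<And>k j. j < k \<Longrightarrow> (c^k)$j = 0" using startsby_zero_power_prefix[OF c0] by blast
  have zd: "\<And>k j. j < k \<Longrightarrow> (d^k)$j = 0" using startsby_zero_power_prefix[OF d0] by blast
  let ?S = "{(k::nat, m::nat). k + m \<le> n}"
  have s: "?S \<subseteq> {0..n} \<times> {0..n}" by (simp add: subset_eq)
  have f: "finite {(k::nat, m::nat). k + m \<le> n}"
    by (auto intro: finite_subset[OF s])
  have "?r = (\<Sum>(k, m) \<in> {(k, m). k + m \<le> n}. \<Sum>j = 0..n. a $ k * b $ m * (c ^ k $ j * d ^ m $ (n - j)))"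
    by (simp add: fps_mult_nth sum_distrib_left)
  also have "\<dots> = (\<Sum>i = 0..n. \<Sum>(k,m)\<in>{(k,m). k+m \<le> n}. a $ k * c ^ k $ i * b $ m * d ^ m $ (n-i))"
    unfolding sum.swap [where A = "{0..n}"] by (auto simp add: field_simps intro: sum.cong)
  also have "... = (\<Sum>i = 0..n.
                    \<Sum>q = 0..i. \<Sum>j = 0..n - i. a $ q * c ^ q $ i * (b $ j * d ^ j $ (n - i)))"
    apply (rule sum.cong [OF refl])
    apply (simp add: sum.cartesian_product mult.assoc)
    apply (rule sum.mono_neutral_right[OF f], force)
    apply clarsimp
    subgoal for x aa ba by (cases "aa \<le> x"; cases "ba \<le> n - x") (auto simp: zc zd)
    done
  also have "\<dots> = ?l"
    by (simp add: fps_mult_nth fps_compose_nth sum_product)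
  finally show ?thesis by simp
qed

lemma fps_compose_mult_distrib':
  assumes c0: "c $ 0 = (0::'a::comm_ring_1)"
  shows "(a * b) oo c = (a oo c) * (b oo c)"
proof (clarsimp simp add: fps_eq_iff)
  fix n
  have "((a oo c) * (b oo c))$n = sum (\<lambda>s. sum (\<lambda>i. a$i * b$(s - i) * (c^s) $ n) {0..s}) {0..n}"
    unfolding product_composition_lemma'[OF c0 c0] power_add[symmetric]
    unfolding sum_pair_less_iff[where a = "\<lambda>k. a$k" and b="\<lambda>m. b$m" and c="\<lambda>s. (c ^ s)$n" and n = n] ..
  then show "(a * b oo c) $ n = ((a oo c) * (b oo c)) $ n"
    by (simp add: fps_compose_nth fps_mult_nth sum_distrib_right)
qed

lemma fps_compose_power':
  assumes c0: "c $ 0 = (0::'a::comm_ring_1)"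
  shows "(a ^ n) oo c = (a oo c) ^ n"
  by (induction n) (simp_all add: fps_compose_mult_distrib'[OF c0])

lemma fps_compose_const': "fps_const (x::'a::comm_ring_1) oo c = fps_const x"
  by (simp add: fps_eq_iff fps_compose_nth mult_delta_left)


lemma fps_compose_deriv':
  fixes a :: "'a::comm_ring_1 fps"
  assumes b0: "b$0 = 0"
  shows "fps_deriv (a oo b) = ((fps_deriv a) oo b) * fps_deriv b"
proof -
  have "(fps_deriv (a oo b))$n = (((fps_deriv a) oo b) * (fps_deriv b)) $n" for n
  proof -
    have "(fps_deriv (a oo b))$n = sum (\<lambda>i. a $ i * (fps_deriv (b^i))$n) {0.. Suc n}"
      by (simp add: fps_compose_def field_simps sum_distrib_left del: of_nat_Suc)
    also have "\<dots> = sum (\<lambda>i. a$i * ((fps_const (of_nat i)) * (fps_deriv b * (b^(i - 1))))$n) {0.. Suc n}"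
      by (simp add: field_simps fps_deriv_power del: fps_mult_left_const_nth of_nat_Suc)
    also have "\<dots> = sum (\<lambda>i. of_nat i * a$i * (((b^(i - 1)) * fps_deriv b))$n) {0.. Suc n}"
      unfolding fps_mult_left_const_nth  by (simp add: field_simps)
    also have "\<dots> = sum (\<lambda>i. of_nat i * a$i * (sum (\<lambda>j. (b^ (i - 1))$j * (fps_deriv b)$(n - j)) {0..n})) {0.. Suc n}"
      unfolding fps_mult_nth ..
    also have "\<dots> = sum (\<lambda>i. of_nat i * a$i * (sum (\<lambda>j. (b^ (i - 1))$j * (fps_deriv b)$(n - j)) {0..n})) {1.. Suc n}"
      by (intro sum.mono_neutral_right) (auto simp add: mult_delta_left not_le)
    also have "\<dots> = sum (\<lambda>i. of_nat (i + 1) * a$(i+1) * (sum (\<lambda>j. (b^ i)$j * of_nat (n - j + 1) * b$(n - j + 1)) {0..n})) {0.. n}"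
      unfolding fps_deriv_nth
      by (rule sum.reindex_cong [of Suc]) (simp_all add: mult.assoc)
    finally have th0: "(fps_deriv (a oo b))$n =
      sum (\<lambda>i. of_nat (i + 1) * a$(i+1) * (sum (\<lambda>j. (b^ i)$j * of_nat (n - j + 1) * b$(n - j + 1)) {0..n})) {0.. n}" .

    have "(((fps_deriv a) oo b) * (fps_deriv b))$n = sum (\<lambda>i. (fps_deriv b)$ (n - i) * ((fps_deriv a) oo b)$i) {0..n}"
      unfolding fps_mult_nth by (simp add: ac_simps)
    also have "\<dots> = sum (\<lambda>i. sum (\<lambda>j. of_nat (n - i +1) * b$(n - i + 1) * of_nat (j + 1) * a$(j+1) * (b^j)$i) {0..n}) {0..n}"
      unfolding fps_deriv_nth fps_compose_nth sum_distrib_left mult.assoc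
      by (auto simp: subset_eq b0 startsby_zero_power_prefix sum.mono_neutral_left intro: sum.cong)
    also have "\<dots> = sum (\<lambda>i. of_nat (i + 1) * a$(i+1) * (sum (\<lambda>j. (b^ i)$j * of_nat (n - j + 1) * b$(n - j + 1)) {0..n})) {0.. n}"
      unfolding sum_distrib_left
      by (subst sum.swap) (force intro: sum.cong)
    finally show ?thesis
      unfolding th0 by simp
  qed
  then show ?thesis by (simp add: fps_eq_iff)
qed

lemma gpow_compose:
  fixes s :: "'k::field_char_0 \<Rightarrow> 'r::comm_ring_1"
  assumes s: "rhom s" and Y0: "Y $ 0 = 1" and Z0: "Z $ 0 = 0"
  shows "fps_gpow s p Y oo Z = fps_gpow s p (Y oo Z)"
proof (rule gpow_unique[OF s])
  show "(Y oo Z) $ 0 = 1" using Y0 by simp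
  show "(fps_gpow s p Y oo Z) $ 0 = 1" by (simp add: gpow_0th[OF s])
  have "(Y oo Z) * fps_deriv (fps_gpow s p Y oo Z) = ((Y * fps_deriv (fps_gpow s p Y)) oo Z) * fps_deriv Z"
    by (simp add: fps_compose_deriv'[OF Z0] fps_compose_mult_distrib'[OF Z0] mult.assoc)
  also have "\<dots> = ((fps_const (s p) * fps_deriv Y * fps_gpow s p Y) oo Z) * fps_deriv Z"
    by (simp only: gpow_ode[OF s Y0])
  also have "\<dots> = fps_const (s p) * fps_deriv (Y oo Z) * (fps_gpow s p Y oo Z)"
    by (simp add: fps_compose_deriv'[OF Z0] fps_compose_mult_distrib'[OF Z0] fps_compose_const' algebra_simps)
  finally show "(Y oo Z) * fps_deriv (fps_gpow s p Y oo Z) = fps_const (s p) * fps_deriv (Y oo Z) * (fps_gpow s p Y oo Z)" .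
qed





section \<open>Linear extensions on Poly_Mapping\<close>

definition lext :: "('k::comm_ring_1 \<Rightarrow> 'r::comm_ring_1) \<Rightarrow> ('a \<Rightarrow> 'r) \<Rightarrow> ('a \<Rightarrow>\<^sub>0 'k) \<Rightarrow> 'r" where
  "lext s f x = (\<Sum>F\<in>Poly_Mapping.keys x. s (Poly_Mapping.lookup x F) * f F)"

lemma lext_zero[simp]: "lext s f 0 = 0"
  by (simp add: lext_def)

lemma lext_add: "rhom s \<Longrightarrow> lext s f (x + y) = lext s f x + lext s f y"
  unfolding lext_def
  by (rule setsum_keys_plus_distrib) (simp_all add: rhom_zero rhom_add distrib_right)

lemma lext_single: "rhom s \<Longrightarrow> lext s f (Poly_Mapping.single a c) = s c * f a"
  by (simp add: lext_def rhom_zero)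

lemma lext_sum: "rhom s \<Longrightarrow> lext s f (sum g S) = (\<Sum>i\<in>S. lext s f (g i))"
  by (induction S rule: infinite_finite_induct) (simp_all add: lext_add)

lemma pm_induct:
  assumes "P 0" and "\<And>f a b. P f \<Longrightarrow> P (f + Poly_Mapping.single a b)"
  shows "P x"
proof (induction x rule: update_induct)
  case const then show ?case using assms(1) .
next
  case (update f a b)
  have "Poly_Mapping.update a b f = f + Poly_Mapping.single a b"
    using update(1)
    by (intro poly_mapping_eqI) (auto simp: lookup_update lookup_add lookup_single in_keys_iff when_def)
  then show ?case using assms(2)[OF update(3)] by simp
qed

lemma lext_mult:
  assumes s: "rhom s" and f: "\<And>a b. f (a + b) = f a * f b"
  shows "lext s f (x * y) = lext s f x * lext s f y"
proof (induction x rule: pm_induct)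
  case 1 then show ?case by simp
next
  case (2 x a b)
  have "lext s f (Poly_Mapping.single a b * y) = s b * f a * lext s f y"
  proof (induction y rule: pm_induct)
    case 1 then show ?case by simp
  next
    case (2 y a' b')
    then show ?case
      by (simp add: distrib_left lext_add[OF s] mult_single lext_single[OF s] rhom_mult[OF s] f algebra_simps)
  qed
  then show ?case using 2
    by (simp add: distrib_right lext_add[OF s] lext_single[OF s] algebra_simps)
qed

lemma lext_one: "rhom s \<Longrightarrow> f 0 = 1 \<Longrightarrow> lext s f 1 = 1"
  using lext_single[of s f 0 1] by (simp add: rhom_one)

lemma lext_rhom:
  "rhom s \<Longrightarrow> (\<And>a b. f (a + b) = f a * f b) \<Longrightarrow> f 0 = 1 \<Longrightarrow> rhom (lext s f)"
  by (simp add: rhom_def lext_add lext_mult lext_one)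

lemma lext_hom:
  fixes f :: "'a \<Rightarrow> 'r::comm_ring_1" and g :: "'r \<Rightarrow> 'q::comm_ring_1"
  assumes add: "\<And>x y. g (x + y) = g x + g y" and sm: "\<And>c y. g (s c * y) = s' c * g y"
  shows "g (lext s f x) = lext s' (g \<circ> f) x"
proof -
  have g0: "g 0 = 0" using add[of 0 0] by simp
  have "g (sum h S) = (\<Sum>i\<in>S. g (h i))" for h :: "'a \<Rightarrow> 'r" and S
    by (induction S rule: infinite_finite_induct) (simp_all add: g0 add)
  then show ?thesis by (simp add: lext_def sm)
qed

lemma lext_cong: "(\<And>a. f a = g a) \<Longrightarrow> lext s f x = lext s g x"
  by (simp add: lext_def)

definition sc :: "'k::comm_ring_1 \<Rightarrow> ('a::comm_monoid_add \<Rightarrow>\<^sub>0 'k)" where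
  "sc c = Poly_Mapping.single 0 c"

lemma rhom_sc: "rhom sc"
  by (simp add: rhom_def sc_def single_add mult_single)

lemma pm_expand: "lext sc (\<lambda>F. Poly_Mapping.single F 1) x = x"
proof (induction x rule: pm_induct)
  case 1 then show ?case by simp
next
  case (2 f a b) then show ?case
    by (simp add: lext_add[OF rhom_sc] lext_single[OF rhom_sc]) (simp add: sc_def mult_single)
qed

lemma lin_expand:
  assumes add: "\<And>x y. g (x + y) = g x + g y" and sm: "\<And>c y. g (sc c * y) = s' c * g y"
  shows "g x = lext s' (\<lambda>F. g (Poly_Mapping.single F 1)) x"
  using lext_hom[of g sc s' "\<lambda>F. Poly_Mapping.single F 1" x, OF add sm] pm_expand[of x]
  by (simp add: o_def)

lemma pm_smult_sc: "pm_smult c x = sc c * x"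
  by (simp add: pm_smult_def sc_def mult_map_scale_conv_mult)

lemma HR_scalar_sc: "HR_scalar = sc"
  by (simp add: fun_eq_iff HR_scalar_def sc_def)





section \<open>The Hopf algebra structure\<close>

abbreviation eb :: "forest \<Rightarrow> 'k::comm_ring_1 HR" where
  "eb F \<equiv> Poly_Mapping.single F 1"

definition Lm :: "'k::comm_ring_1 HR \<Rightarrow> 'k HR2" where
  "Lm = lext sc (\<lambda>F. Poly_Mapping.single (F, 0) 1)"
definition Rm :: "'k::comm_ring_1 HR \<Rightarrow> 'k HR2" where
  "Rm = lext sc (\<lambda>G. Poly_Mapping.single (0, G) 1)"

lemma zero_pair: "((0::'a::zero), (0::'b::zero)) = 0" by (simp add: zero_prod_def)

lemma rhom_Lm: "rhom (Lm :: 'k::comm_ring_1 HR \<Rightarrow> 'k HR2)"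
  unfolding Lm_def by (rule lext_rhom[OF rhom_sc]) (simp_all add: mult_single zero_pair)
lemma rhom_Rm: "rhom (Rm :: 'k::comm_ring_1 HR \<Rightarrow> 'k HR2)"
  unfolding Rm_def by (rule lext_rhom[OF rhom_sc]) (simp_all add: mult_single zero_pair)

lemma sc_single1: "sc c * Poly_Mapping.single k 1 = Poly_Mapping.single k c"
  by (simp add: sc_def mult_single)

lemma Lm_sc: "Lm (sc c) = sc c"
  by (simp add: Lm_def sc_def lext_single[OF rhom_sc] sc_single1 zero_pair)
lemma Rm_sc: "Rm (sc c) = sc c"
  by (simp add: Rm_def sc_def lext_single[OF rhom_sc] sc_single1 zero_pair)

lemma Lm_expand: "Lm x = (\<Sum>a\<in>Poly_Mapping.keys x. Poly_Mapping.single (a, 0) (Poly_Mapping.lookup x a))"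
  by (simp add: Lm_def lext_def sc_single1)
lemma Rm_expand: "Rm x = (\<Sum>a\<in>Poly_Mapping.keys x. Poly_Mapping.single (0, a) (Poly_Mapping.lookup x a))"
  by (simp add: Rm_def lext_def sc_single1)

lemma LR_expand: "Lm x * Rm y = (\<Sum>a\<in>Poly_Mapping.keys x. \<Sum>b\<in>Poly_Mapping.keys y.
      Poly_Mapping.single (a, b) (Poly_Mapping.lookup x a * Poly_Mapping.lookup y b))"
  by (simp add: Lm_expand Rm_expand sum_product mult_single)

lemma tensor_LR: "tensor x y = Lm x * Rm y"
  by (simp add: tensor_def LR_expand)

lemma lext_LR:
  assumes s: "rhom s"
  shows "lext s h (Lm x * Rm y) = (\<Sum>a\<in>Poly_Mapping.keys x. \<Sum>b\<in>Poly_Mapping.keys y.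
      s (Poly_Mapping.lookup x a) * s (Poly_Mapping.lookup y b) * h (a, b))"
  by (simp add: LR_expand lext_sum[OF s] lext_single[OF s] rhom_mult[OF s])

lemma lin_lext:
  fixes g :: "'k::comm_ring_1 HR \<Rightarrow> 'q::comm_ring_1"
  assumes add: "\<And>x y. g (x + y) = g x + g y" and sm: "\<And>c y. g (sc c * y) = s' c * g y"
  shows "g x = (\<Sum>a\<in>Poly_Mapping.keys x. s' (Poly_Mapping.lookup x a) * g (eb a))"
  using lin_expand[of g s' x, OF add sm] by (simp add: lext_def)

lemma delta_forest_add: "delta_forest (F + G) = delta_forest F * delta_forest G"
  by (simp add: delta_forest_def)
lemma delta_forest_0: "delta_forest 0 = 1"
  by (simp add: delta_forest_def)

lemma Delta_lext: "Delta = lext sc delta_forest"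
  by (simp add: fun_eq_iff Delta_def lext_def pm_smult_sc)

lemma rhom_Delta: "rhom (Delta :: 'k::comm_ring_1 HR \<Rightarrow> 'k HR2)"
  unfolding Delta_lext by (rule lext_rhom[OF rhom_sc]) (simp_all add: delta_forest_add delta_forest_0)

lemma counit_lext: "counit x = lext (\<lambda>c. c) (\<lambda>F. if F = 0 then 1 else 0) x"
  by (simp add: counit_def lext_def mult_delta_right sum.delta in_keys_iff)

lemma rhom_id: "rhom (\<lambda>c. c)" by (simp add: rhom_def)

lemma rhom_counit: "rhom (counit :: 'k::comm_ring_1 HR \<Rightarrow> 'k)"
  unfolding counit_lext[abs_def] by (rule lext_rhom[OF rhom_id]) auto

lemma counit_sc: "counit (sc c) = c"
  by (simp add: counit_def sc_def)

lemma counit_eb: "counit (eb a :: 'k::comm_ring_1 HR) = (if a = 0 then 1 else 0)"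
  by (simp add: counit_def lookup_single)

definition Lc :: "'k::comm_ring_1 HR2 \<Rightarrow> 'k HR" where
  "Lc = lext sc (\<lambda>ab. if fst ab = 0 then eb (snd ab) else 0)"

lemma rhom_Lc: "rhom (Lc :: 'k::comm_ring_1 HR2 \<Rightarrow> 'k HR)"
  unfolding Lc_def by (rule lext_rhom[OF rhom_sc]) (auto simp: mult_single)

lemma sc_hom_add: "sc (x + y) = sc x + sc y" by (simp add: rhom_add[OF rhom_sc])
lemma sc_hom_mult: "sc (x * y) = sc x * sc y" by (simp add: rhom_mult[OF rhom_sc])

lemma rhom_sc_mult: "rhom g \<Longrightarrow> g (sc c) = sc c \<Longrightarrow> g (sc c * y) = sc c * g y"
  by (simp add: rhom_mult)

lemma Lc_sc: "Lc (sc c) = sc c"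
  by (simp add: Lc_def sc_def lext_single[OF rhom_sc] sc_single1)

lemma Lc_Lm: "Lc (Lm x) = sc (counit x)"
proof -
  have "Lc (Lm x) = lext sc (Lc \<circ> (\<lambda>F. Poly_Mapping.single (F, 0) 1)) x"
    unfolding Lm_def by (rule lext_hom) (simp_all add: rhom_add[OF rhom_Lc] rhom_sc_mult[OF rhom_Lc Lc_sc])
  also have "\<dots> = lext sc (sc \<circ> (\<lambda>F. if F = 0 then 1 else 0)) x"
    by (rule lext_cong) (simp add: Lc_def lext_single[OF rhom_sc] sc_def)
  also have "\<dots> = sc (counit x)"
    unfolding counit_lext by (rule lext_hom[symmetric]) (simp_all add: sc_hom_add sc_hom_mult)
  finally show ?thesis .
qed

lemma Lc_Rm: "Lc (Rm x) = x"
proof -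
  have "Lc (Rm x) = lext sc (Lc \<circ> (\<lambda>F. Poly_Mapping.single (0, F) 1)) x"
    unfolding Rm_def by (rule lext_hom) (simp_all add: rhom_add[OF rhom_Lc] rhom_sc_mult[OF rhom_Lc Lc_sc])
  also have "\<dots> = lext sc (\<lambda>F. eb F) x"
    by (rule lext_cong) (simp add: Lc_def lext_single[OF rhom_sc] sc_single1)
  finally show ?thesis by (simp add: pm_expand)
qed


lemma rhom_prod_mset: "rhom g \<Longrightarrow> g (prod_mset M) = prod_mset (image_mset g M)"
  by (induction M) (simp_all add: rhom_one rhom_mult)

lemma lext_sc_mult:
  assumes s: "rhom s"
  shows "lext s f (sc c * y) = s c * lext s f y"
proof (induction y rule: pm_induct)
  case 1 then show ?case by simp
next
  case (2 y a b) then show ?case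
    by (simp add: distrib_left lext_add[OF s] sc_def mult_single lext_single[OF s] rhom_mult[OF s] algebra_simps)
qed

definition Bp :: "'k::comm_ring_1 HR \<Rightarrow> 'k HR" where
  "Bp = lext sc (\<lambda>G. eb {# Node G #})"

lemma id_tensor_Bplus_lext: "id_tensor_Bplus t = lext sc (\<lambda>ab. Poly_Mapping.single (fst ab, {# Node (snd ab) #}) 1) t"
  by (simp add: id_tensor_Bplus_def lext_def sc_single1)

lemma Lc_Bplus: "Lc (id_tensor_Bplus t) = Bp (Lc t)"
proof -
  have "Lc (id_tensor_Bplus t) = lext sc (Lc \<circ> (\<lambda>ab. Poly_Mapping.single (fst ab, {# Node (snd ab) #}) 1)) t"
    unfolding id_tensor_Bplus_lext
    by (rule lext_hom) (simp_all add: rhom_add[OF rhom_Lc] rhom_sc_mult[OF rhom_Lc Lc_sc])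
  also have "\<dots> = lext sc (Bp \<circ> (\<lambda>ab. if fst ab = 0 then eb (snd ab) else 0)) t"
    by (rule lext_cong) (simp add: Lc_def Bp_def lext_single[OF rhom_sc] sc_single1)
  also have "\<dots> = Bp (Lc t)"
    unfolding Lc_def
    by (rule lext_hom[symmetric]) (simp_all add: Bp_def lext_add[OF rhom_sc] lext_sc_mult[OF rhom_sc])
  finally show ?thesis .
qed


lemma prod_eb: "prod_mset (image_mset (\<lambda>t. eb {#t#}) G) = (eb G :: 'k::comm_ring_1 HR)"
  by (induction G) (simp_all add: mult_single add_mset_add_single[symmetric] add.commute)

lemma Lc_delta_tree: "Lc (delta_tree t :: 'k::comm_ring_1 HR2) = eb {#t#}"
proof (induction t)
  case (Node G)
  have "image_mset (\<lambda>t. Lc (delta_tree t :: 'k HR2)) G = image_mset (\<lambda>t. eb {#t#}) G"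
    using Node by (intro image_mset_cong) auto
  then have P: "Lc (prod_mset (image_mset delta_tree G) :: 'k HR2) = eb G"
    by (simp add: rhom_prod_mset[OF rhom_Lc] multiset.map_comp o_def prod_eb)
  have "Lc (Poly_Mapping.single ({#Node G#}, 0) 1 :: 'k HR2) = 0"
    by (simp add: Lc_def lext_single[OF rhom_sc])
  then show ?case
    by (simp add: rhom_add[OF rhom_Lc] Lc_Bplus P Bp_def lext_single[OF rhom_sc] sc_single1)
qed

lemma Lc_delta_forest: "Lc (delta_forest F :: 'k::comm_ring_1 HR2) = eb F"
  by (simp add: delta_forest_def rhom_prod_mset[OF rhom_Lc] multiset.map_comp o_def Lc_delta_tree prod_eb)

lemma Lc_Delta: "Lc (Delta x) = x"
proof -
  have "Lc (Delta x) = lext sc (Lc \<circ> delta_forest) x"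
    unfolding Delta_lext by (rule lext_hom) (simp_all add: rhom_add[OF rhom_Lc] rhom_sc_mult[OF rhom_Lc Lc_sc])
  also have "\<dots> = lext sc (\<lambda>F. eb F) x"
    by (rule lext_cong) (simp add: Lc_delta_forest)
  finally show ?thesis by (simp add: pm_expand)
qed

lemma HR_linear_add: "HR_linear B \<Longrightarrow> B (x + y) = B x + B y"
  by (simp add: HR_linear_def)
lemma HR_linear_sc: "HR_linear B \<Longrightarrow> B (sc c * x) = sc c * B x"
  by (simp add: HR_linear_def pm_smult_sc[symmetric])
lemma HR_linear_zero: "HR_linear B \<Longrightarrow> B 0 = 0"
  using HR_linear_add[of B 0 0] by simp
lemma HR_linear_sum: "HR_linear B \<Longrightarrow> B (sum g S) = (\<Sum>i\<in>S. B (g i))"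
  by (induction S rule: infinite_finite_induct) (simp_all add: HR_linear_zero HR_linear_add)

lemma id_tensor_lext: "id_tensor B t = lext sc (\<lambda>ab. Lm (eb (fst ab)) * Rm (B (eb (snd ab)))) t"
  by (simp add: id_tensor_def lext_def pm_smult_sc tensor_LR forest_basis_def)

lemma Lc_id_tensor:
  assumes B: "HR_linear B"
  shows "Lc (id_tensor B t) = B (Lc t)"
proof -
  have "Lc (id_tensor B t) = lext sc (Lc \<circ> (\<lambda>ab. Lm (eb (fst ab)) * Rm (B (eb (snd ab))))) t"
    unfolding id_tensor_lext by (rule lext_hom) (simp_all add: rhom_add[OF rhom_Lc] rhom_sc_mult[OF rhom_Lc Lc_sc])
  also have "\<dots> = lext sc (B \<circ> (\<lambda>ab. if fst ab = 0 then eb (snd ab) else 0)) t"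
    by (rule lext_cong) (simp add: rhom_mult[OF rhom_Lc] Lc_Lm Lc_Rm counit_eb HR_linear_zero[OF B] sc_def)
  also have "\<dots> = B (Lc t)"
    unfolding Lc_def by (rule lext_hom[symmetric]) (simp_all add: HR_linear_add[OF B] HR_linear_sc[OF B])
  finally show ?thesis .
qed

lemma counit_cocycle:
  assumes B: "one_cocycle B"
  shows "counit (B x) = 0"
proof -
  have lin: "HR_linear B" using B by (simp add: one_cocycle_def)
  have "Lc (Delta (B x)) = Lc (id_tensor B (Delta x)) + Lc (tensor (B x) 1)"
    using B by (simp add: one_cocycle_def rhom_add[OF rhom_Lc])
  then have "B x = B x + sc (counit (B x))"
    by (simp add: Lc_Delta Lc_id_tensor[OF lin] tensor_LR rhom_mult[OF rhom_Lc] Lc_Lm Lc_Rm)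
  then have "sc (counit (B x)) = (0 :: 'a HR)" by simp
  then show ?thesis by (metis counit_sc rhom_zero[OF rhom_sc])
qed


lemma id_tensor_add: "id_tensor B (t1 + t2) = id_tensor B t1 + id_tensor B t2"
  by (simp add: id_tensor_lext lext_add[OF rhom_sc])

lemma id_tensor_sum: "id_tensor B (sum g S) = (\<Sum>i\<in>S. id_tensor B (g i))"
  by (simp add: id_tensor_lext lext_sum[OF rhom_sc])

lemma id_tensor_LR:
  assumes B: "HR_linear B"
  shows "id_tensor B (Lm x * Rm y) = Lm x * Rm (B y)"
proof -
  have Lx: "Lm x = (\<Sum>a\<in>Poly_Mapping.keys x. sc (Poly_Mapping.lookup x a) * Lm (eb a))"
    by (rule lin_lext) (simp_all add: rhom_add[OF rhom_Lm] rhom_sc_mult[OF rhom_Lm Lm_sc])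
  have Ry: "Rm (B y) = (\<Sum>b\<in>Poly_Mapping.keys y. sc (Poly_Mapping.lookup y b) * Rm (B (eb b)))"
    by (rule lin_lext[where g="\<lambda>y. Rm (B y)"])
       (simp_all add: HR_linear_add[OF B] HR_linear_sc[OF B] rhom_add[OF rhom_Rm] rhom_sc_mult[OF rhom_Rm Rm_sc])
  show ?thesis
    unfolding id_tensor_lext lext_LR[OF rhom_sc] unfolding Lx Ry sum_product
    by (simp add: algebra_simps)
qed

lemma lin_map_add: "lin_map iota a \<Longrightarrow> a (x + y) = a x + a y"
  by (simp add: lin_map_def)
lemma lin_map_sc: "lin_map iota a \<Longrightarrow> a (sc c * x) = iota c * a x"
  by (simp add: lin_map_def pm_smult_sc[symmetric])
lemma lin_map_zero: "lin_map iota a \<Longrightarrow> a 0 = 0"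
  using lin_map_add[of iota a 0 0] by simp
lemma lin_map_sum: "lin_map iota a \<Longrightarrow> a (sum g S) = (\<Sum>i\<in>S. a (g i))"
  by (induction S rule: infinite_finite_induct) (simp_all add: lin_map_zero lin_map_add)

lemma conv_lext: "conv iota a b x = lext iota (\<lambda>ab. a (eb (fst ab)) * b (eb (snd ab))) (Delta x)"
  by (simp add: conv_def lext_def forest_basis_def mult.assoc)

lemma lext_conv_LR:
  assumes i: "rhom iota" and a: "lin_map iota a" and b: "lin_map iota b"
  shows "lext iota (\<lambda>ab. a (eb (fst ab)) * b (eb (snd ab))) (Lm x * Rm y) = a x * b y"
proof -
  have ax: "a x = (\<Sum>u\<in>Poly_Mapping.keys x. iota (Poly_Mapping.lookup x u) * a (eb u))"
    by (rule lin_lext) (simp_all add: lin_map_add[OF a] lin_map_sc[OF a])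
  have bx: "b y = (\<Sum>u\<in>Poly_Mapping.keys y. iota (Poly_Mapping.lookup y u) * b (eb u))"
    by (rule lin_lext) (simp_all add: lin_map_add[OF b] lin_map_sc[OF b])
  show ?thesis
    unfolding lext_LR[OF i] ax bx sum_product by (simp add: algebra_simps)
qed





lemma mult_compose_nth:
  fixes A C Z :: "'a::comm_ring_1 fps"
  assumes Z0: "Z $ 0 = 0"
  shows "(A * (C oo Z)) $ m = (\<Sum>k\<le>m. C $ k * (A * Z ^ k) $ m)"
proof -
  have zz: "\<And>k j. j < k \<Longrightarrow> (Z ^ k) $ j = 0" using startsby_zero_power_prefix[OF Z0] by blast
  have "(A * (C oo Z)) $ m = (\<Sum>i=0..m. A $ i * (\<Sum>k=0..m-i. C $ k * (Z ^ k) $ (m - i)))"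
    by (simp add: fps_mult_nth fps_compose_nth)
  also have "\<dots> = (\<Sum>i=0..m. \<Sum>k=0..m. A $ i * (C $ k * (Z ^ k) $ (m - i)))"
  proof (rule sum.cong[OF refl])
    fix i assume i: "i \<in> {0..m}"
    have "(\<Sum>k=0..m-i. C $ k * (Z ^ k) $ (m - i)) = (\<Sum>k=0..m. C $ k * (Z ^ k) $ (m - i))"
      using i by (intro sum.mono_neutral_left) (auto simp: zz)
    then show "A $ i * (\<Sum>k=0..m-i. C $ k * (Z ^ k) $ (m - i)) = (\<Sum>k=0..m. A $ i * (C $ k * (Z ^ k) $ (m - i)))"
      by (simp add: sum_distrib_left)
  qed
  also have "\<dots> = (\<Sum>k=0..m. \<Sum>i=0..m. A $ i * (C $ k * (Z ^ k) $ (m - i)))"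
    by (rule sum.swap)
  also have "\<dots> = (\<Sum>k\<le>m. C $ k * (A * Z ^ k) $ m)"
    by (simp add: fps_mult_nth sum_distrib_left atMost_atLeast0 algebra_simps)
  finally show ?thesis .
qed

lemma tri_swap:
  "(\<Sum>n\<in>{1..(N::nat)}. \<Sum>k\<in>{n..N}. f n k) = (\<Sum>k\<in>{1..N}. \<Sum>n\<in>{1..k}. (f n k :: 'a::comm_monoid_add))"
proof -
  have "(\<Sum>n\<in>{1..N}. \<Sum>k\<in>{n..N}. f n k) = (\<Sum>n\<in>{1..N}. \<Sum>k\<in>{1..N}. if n \<le> k then f n k else 0)"
  proof (rule sum.cong[OF refl])
    fix n assume n: "n \<in> {1..N}"
    have "{k \<in> {1..N}. n \<le> k} = {n..N}" using n by auto
    then show "(\<Sum>k\<in>{n..N}. f n k) = (\<Sum>k\<in>{1..N}. if n \<le> k then f n k else 0)"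
      using sum.inter_filter[of "{1..N}" "f n" "\<lambda>k. n \<le> k"] by simp
  qed
  also have "\<dots> = (\<Sum>k\<in>{1..N}. \<Sum>n\<in>{1..N}. if n \<le> k then f n k else 0)"
    by (rule sum.swap)
  also have "\<dots> = (\<Sum>k\<in>{1..N}. \<Sum>n\<in>{1..k}. f n k)"
  proof (rule sum.cong[OF refl])
    fix k assume k: "k \<in> {1..N}"
    have "{n \<in> {1..N}. n \<le> k} = {1..k}" using k by auto
    then show "(\<Sum>n\<in>{1..N}. if n \<le> k then f n k else 0) = (\<Sum>n\<in>{1..k}. f n k)"
      using sum.inter_filter[of "{1..N}" "\<lambda>n. f n k" "\<lambda>n. n \<le> k"] by simp
  qed
  finally show ?thesis .
qed

lemma shift_sum: "(n::nat) \<le> N \<Longrightarrow> (\<Sum>j\<le>N - n. g (n + j)) = (\<Sum>k\<in>{n..N}. (g k :: 'a::comm_monoid_add))"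
  by (rule sum.reindex_bij_witness[where i="\<lambda>k. k - n" and j="\<lambda>j. n + j"]) auto

lemma Delta_sc: "Delta (sc c) = sc c"
  by (simp add: Delta_lext sc_def lext_single[OF rhom_sc] delta_forest_0 sc_single1)

locale dse =
  fixes \<kappa> :: "'k::field_char_0"
    and B :: "nat \<Rightarrow> 'k HR \<Rightarrow> 'k HR"
    and X :: "'k HR fps"
  assumes cocycles: "\<And>n. n \<ge> 1 \<Longrightarrow> one_cocycle (B n)"
    and DSE: "\<And>N. fps_nth X N = (if N = 0 then 1 else 0)
                 + (\<Sum>n\<in>{1..N}. B n (fps_nth (fps_gpow HR_scalar (1 + of_nat n * \<kappa>) X) (N - n)))"
begin

abbreviation P :: "'k \<Rightarrow> 'k HR fps" where "P p \<equiv> fps_gpow sc p X"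
abbreviation K :: "'k HR fps" where "K \<equiv> P \<kappa>"
abbreviation Lh :: "'k HR fps \<Rightarrow> 'k HR2 fps" where "Lh \<equiv> fps_comp Lm"
abbreviation Rh :: "'k HR fps \<Rightarrow> 'k HR2 fps" where "Rh \<equiv> fps_comp Rm"
definition Z :: "'k HR2 fps" where "Z = fps_X * Lh K"

lemma DSE': "X $ N = (if N = 0 then 1 else 0) + (\<Sum>n\<in>{1..N}. B n ((P (1 + of_nat n * \<kappa>)) $ (N - n)))"
  using DSE[of N] by (simp add: HR_scalar_sc)

lemma X0: "X $ 0 = 1" using DSE'[of 0] by simp

lemma P_shift: "P (p + of_nat j * \<kappa>) = P p * K ^ j"
  using gpow_add[OF rhom_sc X0, of p "of_nat j * \<kappa>"] gpow_nat_mult[OF rhom_sc X0, of j \<kappa>] by simp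

lemma P_1: "P (1 + of_nat j * \<kappa>) = X * K ^ j"
  using P_shift[of 1 j] gpow_one[OF rhom_sc X0] by simp

lemma Z0: "Z $ 0 = 0" by (simp add: Z_def)

lemma LRnth: "(Lh A * (Rh C oo Z)) $ m = (\<Sum>k\<le>m. Lm ((A * K ^ k) $ (m - k)) * Rm (C $ k))"
proof -
  have "(Lh A * (Rh C oo Z)) $ m = (\<Sum>k\<le>m. Rm (C $ k) * (Lh A * Z ^ k) $ m)"
    by (simp add: mult_compose_nth[OF Z0])
  also have "\<dots> = (\<Sum>k\<le>m. Lm ((A * K ^ k) $ (m - k)) * Rm (C $ k))"
  proof (rule sum.cong[OF refl])
    fix k assume "k \<in> {..m}"
    then have km: "k \<le> m" by simp
    have "Lh A * Z ^ k = fps_X ^ k * Lh (A * K ^ k)"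
      by (simp add: Z_def fps_comp_mult[OF rhom_Lm] fps_comp_power[OF rhom_Lm] power_mult_distrib algebra_simps)
    then show "Rm (C $ k) * (Lh A * Z ^ k) $ m = Lm ((A * K ^ k) $ (m - k)) * Rm (C $ k)"
      using km by (simp add: fps_X_power_mult_nth mult.commute)
  qed
  finally show ?thesis .
qed

lemma power_lemma:
  assumes H: "\<And>m. m < N \<Longrightarrow> Delta (X $ m) = (Lh X * (Rh X oo Z)) $ m"
    and mN: "m < N"
  shows "Delta ((P p) $ m) = (Lh (P p) * (Rh (P p) oo Z)) $ m"
proof -
  have LX0: "Lh X $ 0 = 1" by (simp add: X0 rhom_one[OF rhom_Lm])
  have RX0: "(Rh X oo Z) $ 0 = 1" by (simp add: X0 rhom_one[OF rhom_Rm])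
  have "Delta ((P p) $ m) = fps_comp Delta (P p) $ m" by simp
  also have "\<dots> = fps_gpow sc p (fps_comp Delta X) $ m"
    by (simp only: gpow_hom[OF rhom_sc rhom_sc rhom_Delta Delta_sc X0])
  also have "\<dots> = fps_gpow sc p (Lh X * (Rh X oo Z)) $ m"
    by (rule gpow_local) (use H mN in simp)
  also have "fps_gpow sc p (Lh X * (Rh X oo Z)) = fps_gpow sc p (Lh X) * fps_gpow sc p (Rh X oo Z)"
    by (rule gpow_mult_base[OF rhom_sc LX0 RX0])
  also have "fps_gpow sc p (Lh X) = Lh (P p)"
    by (rule gpow_hom[OF rhom_sc rhom_sc rhom_Lm Lm_sc X0, symmetric])
  also have "fps_gpow sc p (Rh X oo Z) = Rh (P p) oo Z"
    using gpow_compose[OF rhom_sc _ Z0, of "Rh X" p] gpow_hom[OF rhom_sc rhom_sc rhom_Rm Rm_sc X0, of p]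
    by (simp add: X0 rhom_one[OF rhom_Rm])
  finally show ?thesis .
qed

lemma Delta_X: "Delta (X $ N) = (Lh X * (Rh X oo Z)) $ N"
proof (induction N rule: less_induct)
  case (less N)
  show ?case
  proof (cases "N = 0")
    case True
    then show ?thesis
      by (simp add: X0 rhom_one[OF rhom_Delta] rhom_one[OF rhom_Lm] rhom_one[OF rhom_Rm])
  next
    case False
    define p where "p n = 1 + of_nat n * \<kappa>" for n
    define f where "f n k = Lm ((X * K ^ k) $ (N - k)) * Rm (B n ((P (p n)) $ (k - n)))" for n k
    have XN: "X $ N = (\<Sum>n\<in>{1..N}. B n ((P (p n)) $ (N - n)))"
      using DSE'[of N] False by (simp add: p_def)
    have step: "Delta (B n ((P (p n)) $ (N - n))) = (\<Sum>k\<in>{n..N}. f n k) + Lm (B n ((P (p n)) $ (N - n)))"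
      if n: "n \<in> {1..N}" for n
    proof -
      have cc: "one_cocycle (B n)" using n cocycles by simp
      then have lin: "HR_linear (B n)" by (simp add: one_cocycle_def)
      have D: "Delta ((P (p n)) $ (N - n)) = (\<Sum>j\<le>N - n. Lm ((P (p n) * K ^ j) $ (N - n - j)) * Rm ((P (p n)) $ j))"
        using power_lemma[OF less.IH, where m="N - n" and p="p n"] n by (simp add: LRnth)
      have "id_tensor (B n) (Delta ((P (p n)) $ (N - n)))
          = (\<Sum>j\<le>N - n. Lm ((P (p n) * K ^ j) $ (N - n - j)) * Rm (B n ((P (p n)) $ j)))"
        unfolding D id_tensor_sum id_tensor_LR[OF lin] ..
      also have "\<dots> = (\<Sum>j\<le>N - n. f n (n + j))"
        by (rule sum.cong[OF refl]) (simp add: f_def p_def P_1, simp add: power_add algebra_simps diff_diff_left)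
      also have "\<dots> = (\<Sum>k\<in>{n..N}. f n k)"
        using n by (intro shift_sum) simp
      finally have "id_tensor (B n) (Delta ((P (p n)) $ (N - n))) = (\<Sum>k\<in>{n..N}. f n k)" .
      then show ?thesis
        using cc by (simp add: one_cocycle_def tensor_LR rhom_one[OF rhom_Rm])
    qed
    have inner: "(\<Sum>n\<in>{1..k}. f n k) = Lm ((X * K ^ k) $ (N - k)) * Rm (X $ k)" if k: "k \<in> {1..N}" for k
    proof -
      have "X $ k = (\<Sum>n\<in>{1..k}. B n ((P (p n)) $ (k - n)))"
        using DSE'[of k] k by (simp add: p_def)
      then show ?thesis
        by (simp add: f_def sum_distrib_left rhom_sum[OF rhom_Rm])
    qed
    have "Delta (X $ N) = (\<Sum>n\<in>{1..N}. (\<Sum>k\<in>{n..N}. f n k) + Lm (B n ((P (p n)) $ (N - n))))"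
      unfolding XN rhom_sum[OF rhom_Delta] by (rule sum.cong[OF refl]) (rule step)
    also have "\<dots> = (\<Sum>k\<in>{1..N}. \<Sum>n\<in>{1..k}. f n k) + Lm (X $ N)"
      unfolding sum.distrib tri_swap XN rhom_sum[OF rhom_Lm] ..
    also have "\<dots> = (\<Sum>k\<in>{1..N}. Lm ((X * K ^ k) $ (N - k)) * Rm (X $ k)) + Lm (X $ N)"
      using inner by simp
    also have "\<dots> = (\<Sum>k\<in>insert 0 {1..N}. Lm ((X * K ^ k) $ (N - k)) * Rm (X $ k))"
      by (simp add: X0 rhom_one[OF rhom_Rm])
    also have "insert 0 {1..N} = {..N}" by auto
    finally show ?thesis by (simp only: LRnth)
  qed
qed

lemma conv_X:
  fixes iota :: "'k \<Rightarrow> 'a::comm_ring_1" and a b :: "'k HR \<Rightarrow> 'a"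
  assumes i: "rhom iota" and a: "lin_map iota a" and b: "lin_map iota b"
  shows "conv iota a b (X $ N) = (\<Sum>k\<le>N. a ((X * K ^ k) $ (N - k)) * b (X $ k))"
  by (simp add: conv_lext Delta_X LRnth lext_sum[OF i] lext_conv_LR[OF i a b])

lemma counit_X: "i \<ge> 1 \<Longrightarrow> counit (X $ i) = 0"
  using DSE'[of i] cocycles
  by (simp add: rhom_sum[OF rhom_counit] counit_cocycle)

end

lemma fps_subst_sum_compose: "fps_subst_sum c Z = Abs_fps c oo Z"
  by (simp add: fps_eq_iff fps_subst_sum_def fps_compose_nth atMost_atLeast0)

lemma rhom_alg: "alg_struct iota \<Longrightarrow> rhom iota"
  by (simp add: alg_struct_def rhom_def)

lemma rhom_char: "character iota f \<Longrightarrow> rhom f"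
  by (simp add: character_def lin_map_def rhom_def)

lemma char_sc: "character iota f \<Longrightarrow> f (sc c) = iota c"
  using lin_map_sc[of iota f c 1] by (simp add: character_def)





lemma (in dse) part1:
  fixes iota :: "'k \<Rightarrow> 'a::comm_ring_1" and Psi lam :: "'k HR \<Rightarrow> 'a"
  assumes alg: "alg_struct iota" and char: "character iota Psi" and lin: "lin_map iota lam"
  shows "fps_comp (conv iota Psi lam) X =
           fps_comp Psi X * fps_subst_sum (\<lambda>n. lam (fps_nth X n)) (fps_X * fps_gpow iota \<kappa> (fps_comp Psi X))"
proof (rule fps_ext)
  fix N
  have i: "rhom iota" using alg by (rule rhom_alg)
  have Pr: "rhom Psi" using char by (rule rhom_char)
  have Pl: "lin_map iota Psi" using char by (simp add: character_def)
  define W where "W = fps_gpow iota \<kappa> (fps_comp Psi X)"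
  have hk: "fps_comp Psi (X * K ^ k) = fps_comp Psi X * W ^ k" for k
    by (simp add: W_def fps_comp_mult[OF Pr] fps_comp_power[OF Pr]
        gpow_hom[OF rhom_sc i Pr char_sc[OF char] X0])
  have "fps_comp (conv iota Psi lam) X $ N = (\<Sum>k\<le>N. Psi ((X * K ^ k) $ (N - k)) * lam (X $ k))"
    by (simp add: conv_X[OF i Pl lin])
  also have "\<dots> = (\<Sum>k\<le>N. lam (X $ k) * (fps_comp Psi X * W ^ k) $ (N - k))"
  proof (rule sum.cong[OF refl])
    fix k
    have "Psi ((X * K ^ k) $ (N - k)) = fps_comp Psi (X * K ^ k) $ (N - k)" by simp
    then show "Psi ((X * K ^ k) $ (N - k)) * lam (X $ k) = lam (X $ k) * (fps_comp Psi X * W ^ k) $ (N - k)"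
      by (simp add: hk mult.commute)
  qed
  also have "\<dots> = (fps_comp Psi X * (Abs_fps (\<lambda>n. lam (X $ n)) oo (fps_X * W))) $ N"
  proof -
    have Z0: "(fps_X * W) $ 0 = 0" by simp
    have "(fps_comp Psi X * (Abs_fps (\<lambda>n. lam (X $ n)) oo (fps_X * W))) $ N
        = (\<Sum>k\<le>N. lam (X $ k) * (fps_comp Psi X * (fps_X * W) ^ k) $ N)"
      by (simp add: mult_compose_nth[OF Z0])
    also have "\<dots> = (\<Sum>k\<le>N. lam (X $ k) * (fps_comp Psi X * W ^ k) $ (N - k))"
    proof (rule sum.cong[OF refl])
      fix k assume "k \<in> {..N}"
      then have kN: "k \<le> N" by simp
      have "fps_comp Psi X * (fps_X * W) ^ k = fps_X ^ k * (fps_comp Psi X * W ^ k)"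
        by (simp add: power_mult_distrib algebra_simps)
      then show "lam (X $ k) * (fps_comp Psi X * (fps_X * W) ^ k) $ N = lam (X $ k) * (fps_comp Psi X * W ^ k) $ (N - k)"
        using kN by (simp add: fps_X_power_mult_nth)
    qed
    finally show ?thesis by simp
  qed
  finally show "fps_comp (conv iota Psi lam) X $ N =
      (fps_comp Psi X * fps_subst_sum (\<lambda>n. lam (X $ n)) (fps_X * fps_gpow iota \<kappa> (fps_comp Psi X))) $ N"
    by (simp add: fps_subst_sum_compose W_def)
qed

lemma nth_deriv_term: "(F + fps_const c * fps_X * fps_deriv F) $ n = F $ n + c * of_nat n * (F $ n :: 'a::comm_ring_1)"
  by (cases n) (simp_all add: mult.assoc algebra_simps)

lemma (in dse) psi_P:
  fixes iota :: "'k \<Rightarrow> 'a::comm_ring_1" and psi :: "'k HR \<Rightarrow> 'a"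
  assumes alg: "alg_struct iota" and inf: "inf_character iota psi"
  shows "psi ((P p) $ m) = iota p * psi (X $ m)"
proof -
  have i: "rhom iota" using alg by (rule rhom_alg)
  have l: "lin_map iota psi" using inf by (simp add: inf_character_def)
  have pm: "psi (x * y) = psi x * iota (counit y) + iota (counit x) * psi y" for x y
    using inf by (simp add: inf_character_def)
  have psi1: "psi 1 = 0"
    using pm[of 1 1] by (simp add: rhom_one[OF rhom_counit] rhom_one[OF i])
  have psi0: "psi 0 = 0" by (rule lin_map_zero[OF l])
  have psidiff: "psi (x - y) = psi x - psi y" for x y
    using lin_map_add[OF l, of "x - y" y] by (simp add: algebra_simps)
  have psi1n: "psi ((1 :: 'k HR fps) $ n) = 0" for n
    by (cases n) (simp_all add: psi0 psi1)
  define U where "U = X - 1"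
  have cU: "counit (U $ j) = 0" for j
  proof (cases "j = 0")
    case True then show ?thesis by (simp add: U_def X0 rhom_zero[OF rhom_counit])
  next
    case False then show ?thesis by (simp add: U_def counit_X)
  qed
  have cUU: "counit ((U ^ j) $ l) = 0" if "j \<ge> 1" for j l
  proof -
    have "fps_comp counit U = 0" by (simp add: fps_eq_iff cU)
    then have "fps_comp counit (U ^ j) = 0"
      using that by (simp add: fps_comp_power[OF rhom_counit])
    then show ?thesis by (metis fps_comp_nth fps_zero_nth)
  qed
  have psiU: "psi ((U ^ k) $ m) = 0" if k2: "k \<ge> 2" for k
  proof -
    obtain j where j: "k = Suc j" "j \<ge> 1" using k2 by (cases k) auto
    have "psi ((U ^ k) $ m) = (\<Sum>i=0..m. psi (U $ i * (U ^ j) $ (m - i)))"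
      by (simp add: j fps_mult_nth lin_map_sum[OF l])
    also have "\<dots> = 0"
      by (rule sum.neutral) (simp add: pm cU cUU[OF j(2)] rhom_zero[OF i])
    finally show ?thesis .
  qed
  have trm: "iota (p gchoose k) * psi ((U ^ k) $ m) = (if k = 1 then iota p * psi (X $ m) else 0)" for k
  proof -
    consider "k = 0" | "k = 1" | "k \<ge> 2" by linarith
    then show ?thesis
    proof cases
      case 1 then show ?thesis by (simp add: psi1 psi0)
    next
      case 2 then show ?thesis by (simp add: U_def psidiff psi1 psi0)
    next
      case 3 then show ?thesis by (simp add: psiU)
    qed
  qed
  have "psi ((P p) $ m) = (\<Sum>k\<le>m. iota (p gchoose k) * psi ((U ^ k) $ m))"
    by (simp add: gpow_nth lin_map_sum[OF l] lin_map_sc[OF l] U_def)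
  also have "\<dots> = (\<Sum>k\<le>m. if k = 1 then iota p * psi (X $ m) else 0)"
    by (simp only: trm)
  also have "\<dots> = iota p * psi (X $ m)"
    by (cases "m = 0") (simp_all add: X0 psi1)
  finally show ?thesis .
qed

lemma (in dse) part2:
  fixes iota :: "'k \<Rightarrow> 'a::comm_ring_1" and psi lam :: "'k HR \<Rightarrow> 'a"
  assumes alg: "alg_struct iota" and inf: "inf_character iota psi" and lin: "lin_map iota lam"
  shows "fps_comp (conv iota psi lam) X =
           fps_comp psi X * (fps_comp lam X + fps_const (iota \<kappa>) * fps_X * fps_deriv (fps_comp lam X))"
proof (rule fps_ext)
  fix N
  have i: "rhom iota" using alg by (rule rhom_alg)
  have l: "lin_map iota psi" using inf by (simp add: inf_character_def)
  have "fps_comp (conv iota psi lam) X $ N = (\<Sum>k\<le>N. psi ((X * K ^ k) $ (N - k)) * lam (X $ k))"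
    by (simp add: conv_X[OF i l lin])
  also have "\<dots> = (\<Sum>k\<le>N. psi (X $ (N - k)) * (lam (X $ k) + iota \<kappa> * of_nat k * lam (X $ k)))"
  proof (rule sum.cong[OF refl])
    fix k
    have "psi ((X * K ^ k) $ (N - k)) = iota (1 + of_nat k * \<kappa>) * psi (X $ (N - k))"
      using psi_P[OF alg inf, of "1 + of_nat k * \<kappa>" "N - k"] by (simp add: P_1)
    then show "psi ((X * K ^ k) $ (N - k)) * lam (X $ k) = psi (X $ (N - k)) * (lam (X $ k) + iota \<kappa> * of_nat k * lam (X $ k))"
      by (simp add: rhom_add[OF i] rhom_mult[OF i] rhom_one[OF i] rhom_of_nat[OF i] algebra_simps)
  qed
  also have "\<dots> = (\<Sum>i=0..N. psi (X $ i) * (lam (X $ (N - i)) + iota \<kappa> * of_nat (N - i) * lam (X $ (N - i))))"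
    by (subst sum.atLeastAtMost_rev) (auto simp: atMost_atLeast0 intro!: sum.cong)
  also have "\<dots> = (fps_comp psi X * (fps_comp lam X + fps_const (iota \<kappa>) * fps_X * fps_deriv (fps_comp lam X))) $ N"
    by (simp only: fps_mult_nth nth_deriv_term fps_comp_nth)
  finally show "fps_comp (conv iota psi lam) X $ N =
      (fps_comp psi X * (fps_comp lam X + fps_const (iota \<kappa>) * fps_X * fps_deriv (fps_comp lam X))) $ N" .
qed



theorem mainTheorem12:
  fixes \<kappa> :: "'k::field_char_0"
    and B :: "nat \<Rightarrow> 'k HR \<Rightarrow> 'k HR"
    and X :: "'k HR fps"
    and iota :: "'k \<Rightarrow> 'a::comm_ring_1"
    and \<Psi> \<psi> lam :: "'k HR \<Rightarrow> 'a"
  assumes cocycles: "\<And>n. n \<ge> 1 \<Longrightarrow> one_cocycle (B n)"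
    and DSE: "\<And>N. fps_nth X N = (if N = 0 then 1 else 0)
                 + (\<Sum>n\<in>{1..N}. B n (fps_nth (fps_gpow HR_scalar (1 + of_nat n * \<kappa>) X) (N - n)))"
    and alg: "alg_struct iota"
    and char: "character iota \<Psi>"
    and infchar: "inf_character iota \<psi>"
    and lin: "lin_map iota lam"
  shows "fps_comp (conv iota \<Psi> lam) X =
           fps_comp \<Psi> X * fps_subst_sum (\<lambda>n. lam (fps_nth X n)) (fps_X * fps_gpow iota \<kappa> (fps_comp \<Psi> X))
       \<and> fps_comp (conv iota \<psi> lam) X =
           fps_comp \<psi> X * (fps_comp lam X + fps_const (iota \<kappa>) * fps_X * fps_deriv (fps_comp lam X))"
proof -
  interpret dse \<kappa> B X
    by (rule dse.intro) (rule cocycles, assumption, rule DSE)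
  show ?thesis using part1[OF alg char lin] part2[OF alg infchar lin] by simp
qed

end
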